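(* Let $\mathbf{X}=(X_1,\ldots,X_d)$ be a random vector (components not necessarily independent), $Y=\eta(\mathbf{X})\in\mathcal{Y}$, and $k_{\mathcal{Y}}$ a positive definite kernel on $\mathcal{Y}$ with $\mathbb{E}_{\xi\sim\mathrm{P}_{Y\mid\mathbf{X}_A=\mathbf{x}_A}}k_{\mathcal{Y}}(\xi,\xi)<\infty$ for all $A\subseteq\{1,\ldots,d\}$ and all $\mathbf{x}_A$, and assume $\mathrm{MMD}^2_{\mathrm{tot}}>0$. Define for $A\subseteq\{1,\ldots,d\}$ $$\mathrm{val}(A)=\frac{\mathbb{E}_{\mathbf{X}_A}\big(\mathrm{MMD}^2(\mathrm{P}_Y,\mathrm{P}_{Y\mid\mathbf{X}_A})\big)}{\mathrm{MMD}^2_{\mathrm{tot}}},\qquad \mathrm{val}'(A)=\frac{\mathbb{E}_{\mathbf{X}_{-A}}\big[\mathbb{E}_{\xi\sim\mathrm{P}_{Y\mid\mathbf{X}_{-A}}}k_{\mathcal{Y}}(\xi,\xi)-\mathbb{E}_{\xi,\xi'\sim\mathrm{P}_{Y\mid\mathbf{X}_{-A}}}k_{\mathcal{Y}}(\xi,\xi')\big]}{\mathrm{MMD}^2_{\mathrm{tot}}}.$$ Then for every $l=1,\ldots,d$, the Shapley value of $l$ computed with value function $\mathrm{val}'$ equals the Shapley value of $l$ computed with value function $\mathrm{val}$ (the MMD-Shapley effect $Sh^{\mathrm{MMD}}_l$).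
   Context: For a value function $v$ on subsets of $\{1,\ldots,d\}$, the Shapley value of $l$ is $\phi_l(v)=\frac1d\sum_{A\subseteq\{1,\ldots,d\}\setminus\{l\}}\binom{d-1}{|A|}^{-1}\big(v(A\cup\{l\})-v(A)\big)$. $\mathbf{X}_A$ is the subvector with indices in $A$, $\mathbf{X}_{-A}$ that with indices in $\{1,\ldots,d\}\setminus A$; $\mathrm{P}_{Y\mid\mathbf{X}_A}$ is the conditional law of $Y$ given $\mathbf{X}_A$ (equal to $\mathrm{P}_Y$ when $A=\emptyset$), and $\xi,\xi'$ are independent draws from it. $\mathrm{MMD}^2(\mathrm{P},\mathrm{Q})=\mathbb{E}k_{\mathcal{Y}}(\xi,\xi')-2\mathbb{E}k_{\mathcal{Y}}(\xi,\zeta)+\mathbb{E}k_{\mathcal{Y}}(\zeta,\zeta')$ with $\xi,\xi'\sim\mathrm{P}$, $\zeta,\zeta'\sim\mathrm{Q}$ independent, and $\mathrm{MMD}^2_{\mathrm{tot}}=\mathbb{E}k_{\mathcal{Y}}(Y,Y)-\mathbb{E}k_{\mathcal{Y}}(Y,Y')$ with $Y'$ an independent copy of $Y$. *)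

theory Defs
  imports "HOL-Probability.Probability"
begin

definition pd_kernel :: "('y \<Rightarrow> 'y \<Rightarrow> real) \<Rightarrow> bool" where
  "pd_kernel k \<longleftrightarrow> (\<forall>x y. k x y = k y x) \<and>
     (\<forall>(ys :: 'y list) (c :: real list). length c = length ys \<longrightarrow>
        (\<Sum>i<length ys. \<Sum>j<length ys. c ! i * c ! j * k (ys ! i) (ys ! j)) \<ge> 0)"

definition subvec :: "(nat \<Rightarrow> 'a \<Rightarrow> 'x) \<Rightarrow> nat set \<Rightarrow> 'a \<Rightarrow> (nat \<Rightarrow> 'x)" where
  "subvec X A \<omega> = restrict (\<lambda>i. X i \<omega>) A"

definition is_cond_law ::
  "'a measure \<Rightarrow> 'z measure \<Rightarrow> ('a \<Rightarrow> 'z) \<Rightarrow> 'y measure \<Rightarrow> ('a \<Rightarrow> 'y) \<Rightarrow> ('z \<Rightarrow> 'y measure) \<Rightarrow> bool"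
  where
  "is_cond_law M Nz Z L Y \<kappa> \<longleftrightarrow>
     \<kappa> \<in> measurable Nz (subprob_algebra L) \<and>
     (\<forall>z\<in>space Nz. prob_space (\<kappa> z)) \<and>
     (\<forall>S\<in>sets Nz. \<forall>T\<in>sets L.
        measure M {\<omega>\<in>space M. Z \<omega> \<in> S \<and> Y \<omega> \<in> T}
          = (\<integral>\<omega>. indicator S (Z \<omega>) * measure (\<kappa> (Z \<omega>)) T \<partial>M))"

definition kexp :: "('y \<Rightarrow> 'y \<Rightarrow> real) \<Rightarrow> 'y measure \<Rightarrow> 'y measure \<Rightarrow> real" where
  "kexp k P Q = (\<integral>p. k (fst p) (snd p) \<partial>(P \<Otimes>\<^sub>M Q))"

definition mmd2 :: "('y \<Rightarrow> 'y \<Rightarrow> real) \<Rightarrow> 'y measure \<Rightarrow> 'y measure \<Rightarrow> real" where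
  "mmd2 k P Q = kexp k P P - 2 * kexp k P Q + kexp k Q Q"

definition mmd2_tot :: "'a measure \<Rightarrow> 'y measure \<Rightarrow> ('a \<Rightarrow> 'y) \<Rightarrow> ('y \<Rightarrow> 'y \<Rightarrow> real) \<Rightarrow> real" where
  "mmd2_tot M L Y k = (\<integral>\<omega>. k (Y \<omega>) (Y \<omega>) \<partial>M) - kexp k (distr M L Y) (distr M L Y)"

definition shapley :: "nat \<Rightarrow> (nat set \<Rightarrow> real) \<Rightarrow> nat \<Rightarrow> real" where
  "shapley d v l = (1 / real d) *
     (\<Sum>A\<in>Pow ({1..d} - {l}). (v (insert l A) - v A) / real ((d - 1) choose card A))"

end

theory Submission
  imports Defs
begin


lemma pd_nonneg: fixes k :: "'y \<Rightarrow> 'y \<Rightarrow> real" assumes "pd_kernel k" shows "0 \<le> k x x"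
proof -
  have H: "\<forall>(ys::'y list) (c::real list). length c = length ys \<longrightarrow>
        (\<Sum>i<length ys. \<Sum>j<length ys. c ! i * c ! j * k (ys ! i) (ys ! j)) \<ge> 0"
    using assms unfolding pd_kernel_def by blast
  from H[rule_format, of "[1]" "[x]"] show ?thesis by simp
qed

lemma bind_integral_nonneg:
  fixes f :: "'y \<Rightarrow> real"
  assumes M: "prob_space M" and Q: "Q \<in> M \<rightarrow>\<^sub>M subprob_algebra L"
    and f: "f \<in> borel_measurable L" and nn: "\<And>y. y \<in> space L \<Longrightarrow> 0 \<le> f y"
    and int: "integrable (M \<bind> Q) f"
  shows "integrable M (\<lambda>\<omega>. \<integral>y. f y \<partial>Q \<omega>)"
    and "(\<integral>y. f y \<partial>(M \<bind> Q)) = (\<integral>\<omega>. (\<integral>y. f y \<partial>Q \<omega>) \<partial>M)"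
proof -
  have sp: "space M \<noteq> {}" using prob_space.not_empty[OF M] .
  have setsQ: "\<And>\<omega>. \<omega> \<in> space M \<Longrightarrow> sets (Q \<omega>) = sets L"
    using measurable_space[OF Q] by (auto simp: space_subprob_algebra)
  have sets: "sets (M \<bind> Q) = sets L" by (rule sets_bind[OF setsQ sp])
  have spB: "space (M \<bind> Q) = space L" using sets by (rule sets_eq_imp_space_eq)
  have fm: "(\<lambda>\<omega>. \<integral>y. f y \<partial>Q \<omega>) \<in> borel_measurable M"
    by (rule measurable_compose[OF Q integral_measurable_subprob_algebra[OF f]])
  have fnm: "(\<lambda>\<omega>. \<integral>\<^sup>+y. ennreal (f y) \<partial>Q \<omega>) \<in> borel_measurable M"
    by (rule measurable_compose[OF Q nn_integral_measurable_subprob_algebra]) (use f in measurable)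
  have eq1: "(\<integral>y. f y \<partial>Q \<omega>) = enn2real (\<integral>\<^sup>+y. ennreal (f y) \<partial>Q \<omega>)" if w: "\<omega> \<in> space M" for \<omega>
  proof (rule integral_eq_nn_integral)
    show "f \<in> borel_measurable (Q \<omega>)" using f setsQ[OF w] by (simp cong: measurable_cong_sets)
    show "AE x in Q \<omega>. 0 \<le> f x" using nn sets_eq_imp_space_eq[OF setsQ[OF w]] by (auto intro!: AE_I2)
  qed
  have NB: "(\<integral>\<^sup>+y. ennreal (f y) \<partial>(M \<bind> Q)) = (\<integral>\<^sup>+\<omega>. \<integral>\<^sup>+y. ennreal (f y) \<partial>Q \<omega> \<partial>M)"
    by (rule nn_integral_bind[OF _ Q]) (use f in measurable)
  have "(\<integral>\<^sup>+y. ennreal (norm (f y)) \<partial>(M \<bind> Q)) < \<infinity>" using int by (simp add: integrable_iff_bounded)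
  moreover have "(\<integral>\<^sup>+y. ennreal (norm (f y)) \<partial>(M \<bind> Q)) = (\<integral>\<^sup>+y. ennreal (f y) \<partial>(M \<bind> Q))"
    by (rule nn_integral_cong) (use nn spB in auto)
  ultimately have fin: "(\<integral>\<^sup>+y. ennreal (f y) \<partial>(M \<bind> Q)) < \<infinity>" by simp
  have AEfin: "AE \<omega> in M. (\<integral>\<^sup>+y. ennreal (f y) \<partial>Q \<omega>) \<noteq> \<infinity>"
    by (rule nn_integral_noteq_infinite[OF fnm]) (use fin NB in auto)
  have E: "(\<integral>\<^sup>+\<omega>. ennreal (\<integral>y. f y \<partial>Q \<omega>) \<partial>M) = (\<integral>\<^sup>+\<omega>. \<integral>\<^sup>+y. ennreal (f y) \<partial>Q \<omega> \<partial>M)"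
    by (rule nn_integral_cong_AE) (use AEfin in \<open>auto simp: eq1 ennreal_enn2real_if\<close>)
  have nn2: "AE \<omega> in M. 0 \<le> (\<integral>y. f y \<partial>Q \<omega>)"
    by (rule AE_I2) (simp add: eq1)
  show "integrable M (\<lambda>\<omega>. \<integral>y. f y \<partial>Q \<omega>)"
    by (rule integrableI_nonneg[OF fm nn2]) (use E NB fin in simp)
  have "(\<integral>y. f y \<partial>(M \<bind> Q)) = enn2real (\<integral>\<^sup>+y. ennreal (f y) \<partial>(M \<bind> Q))"
    by (rule integral_eq_nn_integral) (use f sets nn spB in \<open>auto cong: measurable_cong_sets intro!: AE_I2\<close>)
  also have "\<dots> = enn2real (\<integral>\<^sup>+\<omega>. ennreal (\<integral>y. f y \<partial>Q \<omega>) \<partial>M)" using E NB by simp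
  also have "\<dots> = (\<integral>\<omega>. (\<integral>y. f y \<partial>Q \<omega>) \<partial>M)"
    by (rule integral_eq_nn_integral[symmetric, OF fm nn2])
  finally show "(\<integral>y. f y \<partial>(M \<bind> Q)) = (\<integral>\<omega>. (\<integral>y. f y \<partial>Q \<omega>) \<partial>M)" .
qed

lemma pair_fst_int:
  fixes f :: "'b \<Rightarrow> real"
  assumes Q: "prob_space Q" and fm: "f \<in> borel_measurable P" and fi: "integrable P f"
  shows "integrable (P \<Otimes>\<^sub>M Q) (\<lambda>p. f (fst p))" "(\<integral>p. f (fst p) \<partial>(P \<Otimes>\<^sub>M Q)) = (\<integral>x. f x \<partial>P)"
proof -
  have d: "distr (P \<Otimes>\<^sub>M Q) P fst = P" using prob_space.distr_pair_fst[OF Q] .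
  show "integrable (P \<Otimes>\<^sub>M Q) (\<lambda>p. f (fst p))"
    using integrable_distr_eq[OF measurable_fst fm, of Q] d fi by simp
  show "(\<integral>p. f (fst p) \<partial>(P \<Otimes>\<^sub>M Q)) = (\<integral>x. f x \<partial>P)"
    using integral_distr[OF measurable_fst fm, of Q] d by simp
qed

lemma pair_snd_int:
  fixes f :: "'b \<Rightarrow> real"
  assumes P: "prob_space P" and Q: "prob_space Q" and fm: "f \<in> borel_measurable Q" and fi: "integrable Q f"
  shows "integrable (P \<Otimes>\<^sub>M Q) (\<lambda>p. f (snd p))" "(\<integral>p. f (snd p) \<partial>(P \<Otimes>\<^sub>M Q)) = (\<integral>x. f x \<partial>Q)"
proof -
  interpret P: prob_space P by fact
  interpret Q: prob_space Q by fact
  interpret pair_sigma_finite P Q ..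
  have 1: "integrable (Q \<Otimes>\<^sub>M P) (\<lambda>p. f (fst p))" "(\<integral>p. f (fst p) \<partial>(Q \<Otimes>\<^sub>M P)) = (\<integral>x. f x \<partial>Q)"
    using pair_fst_int[OF P fm fi] by auto
  show "integrable (P \<Otimes>\<^sub>M Q) (\<lambda>p. f (snd p))"
    using integrable_product_swap_iff[of "\<lambda>p. f (snd p)"] 1(1) by (simp add: case_prod_beta')
  have "(\<integral>(x,y). f (snd (y,x)) \<partial>(Q \<Otimes>\<^sub>M P)) = (\<integral>p. f (snd p) \<partial>(P \<Otimes>\<^sub>M Q))"
    by (rule integral_product_swap) (use fm in measurable)
  then show "(\<integral>p. f (snd p) \<partial>(P \<Otimes>\<^sub>M Q)) = (\<integral>x. f x \<partial>Q)"
    using 1(2) by (simp add: case_prod_beta')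
qed

lemma distr_eq_bind:
  assumes M: "prob_space M" and Y: "Y \<in> M \<rightarrow>\<^sub>M L" and Z: "Z \<in> M \<rightarrow>\<^sub>M Nz"
    and cl: "is_cond_law M Nz Z L Y \<kappa>"
  shows "distr M L Y = M \<bind> (\<lambda>\<omega>. \<kappa> (Z \<omega>))"
proof -
  interpret prob_space M by fact
  have km: "\<kappa> \<in> Nz \<rightarrow>\<^sub>M subprob_algebra L" and kp: "\<And>z. z \<in> space Nz \<Longrightarrow> prob_space (\<kappa> z)"
    and ce: "\<And>S T. S \<in> sets Nz \<Longrightarrow> T \<in> sets L \<Longrightarrow> measure M {\<omega>\<in>space M. Z \<omega> \<in> S \<and> Y \<omega> \<in> T}
          = (\<integral>\<omega>. indicator S (Z \<omega>) * measure (\<kappa> (Z \<omega>)) T \<partial>M)"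
    using cl unfolding is_cond_law_def by auto
  have Q: "(\<lambda>\<omega>. \<kappa> (Z \<omega>)) \<in> M \<rightarrow>\<^sub>M subprob_algebra L" by (rule measurable_compose[OF Z km])
  have setsQ: "\<And>\<omega>. \<omega> \<in> space M \<Longrightarrow> sets (\<kappa> (Z \<omega>)) = sets L"
    using measurable_space[OF Q] by (auto simp: space_subprob_algebra)
  show ?thesis
  proof (rule measure_eqI)
    show "sets (distr M L Y) = sets (M \<bind> (\<lambda>\<omega>. \<kappa> (Z \<omega>)))"
      using sets_bind[OF setsQ not_empty] by simp
    fix T assume "T \<in> sets (distr M L Y)"
    then have T: "T \<in> sets L" by simp
    have mT: "(\<lambda>\<omega>. measure (\<kappa> (Z \<omega>)) T) \<in> borel_measurable M"
      unfolding measure_def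
      by (intro borel_measurable_enn2real measurable_compose[OF Q measurable_emeasure_subprob_algebra[OF T]])
    have iT: "integrable M (\<lambda>\<omega>. measure (\<kappa> (Z \<omega>)) T)"
    proof (rule integrable_const_bound[where B=1])
      show "AE x in M. norm (measure (\<kappa> (Z x)) T) \<le> 1"
        using measurable_space[OF Z] kp by (auto intro!: AE_I2 prob_space.prob_le_1)
    qed (rule mT)
    have "emeasure (distr M L Y) T = emeasure M (Y -` T \<inter> space M)" by (rule emeasure_distr[OF Y T])
    also have "\<dots> = ennreal (measure M {\<omega>\<in>space M. Z \<omega> \<in> space Nz \<and> Y \<omega> \<in> T})"
      using measurable_space[OF Z] by (auto simp: emeasure_eq_measure intro!: arg_cong[where f="measure M"])
    also have "\<dots> = ennreal (\<integral>\<omega>. indicator (space Nz) (Z \<omega>) * measure (\<kappa> (Z \<omega>)) T \<partial>M)"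
      using ce[OF sets.top T] by simp
    also have "\<dots> = ennreal (\<integral>\<omega>. measure (\<kappa> (Z \<omega>)) T \<partial>M)"
      using measurable_space[OF Z]
      by (intro arg_cong[where f=ennreal] Bochner_Integration.integral_cong refl) (simp add: indicator_def)
    also have "\<dots> = (\<integral>\<^sup>+\<omega>. ennreal (measure (\<kappa> (Z \<omega>)) T) \<partial>M)"
      by (rule nn_integral_eq_integral[symmetric, OF iT]) simp
    also have "\<dots> = (\<integral>\<^sup>+\<omega>. emeasure (\<kappa> (Z \<omega>)) T \<partial>M)"
      using measurable_space[OF Z] kp by (intro nn_integral_cong) (auto simp: prob_space_def finite_measure.emeasure_eq_measure)
    also have "\<dots> = emeasure (M \<bind> (\<lambda>\<omega>. \<kappa> (Z \<omega>))) T"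
      by (rule emeasure_bind[symmetric, OF not_empty Q T])
    finally show "emeasure (distr M L Y) T = emeasure (M \<bind> (\<lambda>\<omega>. \<kappa> (Z \<omega>))) T" .
  qed
qed



lemma pd_bound: assumes "pd_kernel k" shows "\<bar>k x y\<bar> \<le> (k x x + k y y) / 2"
proof -
  have sym: "k y x = k x y" using assms unfolding pd_kernel_def by blast
  have H: "\<forall>ys (c::real list). length c = length ys \<longrightarrow>
        (\<Sum>i<length ys. \<Sum>j<length ys. c ! i * c ! j * k (ys ! i) (ys ! j)) \<ge> 0"
    using assms unfolding pd_kernel_def by blast
  from H[rule_format, of "[1,1]" "[x,y]"]
  have 1: "k x x + 2 * k x y + k y y \<ge> 0" by (simp add: numeral_2_eq_2 lessThan_Suc sym)
  from H[rule_format, of "[1,-1]" "[x,y]"]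
  have 2: "k x x - 2 * k x y + k y y \<ge> 0" by (simp add: numeral_2_eq_2 lessThan_Suc sym)
  from 1 2 have "2 * k x y \<le> k x x + k y y" "- (2 * k x y) \<le> k x x + k y y" by linarith+
  then show ?thesis by (auto simp: abs_le_iff field_simps)
qed

lemma diag_meas:
  assumes km: "case_prod k \<in> borel_measurable (L \<Otimes>\<^sub>M L)"
  shows "(\<lambda>y. k y y) \<in> borel_measurable L"
  using measurable_compose[OF measurable_Pair[OF measurable_ident measurable_ident] km] by simp

lemma kexp_props:
  fixes k :: "'y \<Rightarrow> 'y \<Rightarrow> real"
  assumes pd: "pd_kernel k" and km: "case_prod k \<in> borel_measurable (L \<Otimes>\<^sub>M L)"
    and P: "prob_space P" and Ps: "sets P = sets L" and Q: "prob_space Q" and Qs: "sets Q = sets L"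
    and Pi: "integrable P (\<lambda>y. k y y)" and Qi: "integrable Q (\<lambda>y. k y y)"
  shows "integrable (P \<Otimes>\<^sub>M Q) (\<lambda>p. k (fst p) (snd p))"
    and "\<bar>kexp k P Q\<bar> \<le> ((\<integral>y. k y y \<partial>P) + (\<integral>y. k y y \<partial>Q)) / 2"
    and "integrable Q (\<lambda>q. \<integral>p. k p q \<partial>P)"
    and "kexp k P Q = (\<integral>q. (\<integral>p. k p q \<partial>P) \<partial>Q)"
proof -
  interpret P: prob_space P by fact
  interpret Q: prob_space Q by fact
  interpret pair_sigma_finite P Q ..
  have sPQ: "sets (P \<Otimes>\<^sub>M Q) = sets (L \<Otimes>\<^sub>M L)" by (rule sets_pair_measure_cong[OF Ps Qs])
  have km': "(\<lambda>p. k (fst p) (snd p)) \<in> borel_measurable (P \<Otimes>\<^sub>M Q)"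
    using km sPQ by (simp add: case_prod_beta' cong: measurable_cong_sets)
  have dL: "(\<lambda>y. k y y) \<in> borel_measurable L" by (rule diag_meas[OF km])
  have dP: "(\<lambda>y. k y y) \<in> borel_measurable P" using dL Ps by (simp cong: measurable_cong_sets)
  have dQ: "(\<lambda>y. k y y) \<in> borel_measurable Q" using dL Qs by (simp cong: measurable_cong_sets)
  note F = pair_fst_int[OF Q dP Pi] and S = pair_snd_int[OF P Q dQ Qi]
  define h where "h p = (k (fst p) (fst p) + k (snd p) (snd p)) / 2" for p
  have hi: "integrable (P \<Otimes>\<^sub>M Q) h" unfolding h_def using F(1) S(1) by simp
  have hI: "(\<integral>p. h p \<partial>(P \<Otimes>\<^sub>M Q)) = ((\<integral>y. k y y \<partial>P) + (\<integral>y. k y y \<partial>Q)) / 2"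
    unfolding h_def using F S by simp
  have hb: "\<bar>k (fst p) (snd p)\<bar> \<le> h p" for p unfolding h_def by (rule pd_bound[OF pd])
  show I: "integrable (P \<Otimes>\<^sub>M Q) (\<lambda>p. k (fst p) (snd p))"
  proof (rule Bochner_Integration.integrable_bound[OF hi km'])
    show "AE x in P \<Otimes>\<^sub>M Q. norm (k (fst x) (snd x)) \<le> norm (h x)"
      using hb by (auto intro!: AE_I2 order_trans[OF _ abs_ge_self])
  qed
  have "\<bar>kexp k P Q\<bar> \<le> (\<integral>p. \<bar>k (fst p) (snd p)\<bar> \<partial>(P \<Otimes>\<^sub>M Q))"
    unfolding kexp_def using integral_norm_bound[of "P \<Otimes>\<^sub>M Q" "\<lambda>p. k (fst p) (snd p)"] by simp
  also have "\<dots> \<le> (\<integral>p. h p \<partial>(P \<Otimes>\<^sub>M Q))"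
    by (rule integral_mono[OF _ hi hb]) (use I in simp)
  finally show "\<bar>kexp k P Q\<bar> \<le> ((\<integral>y. k y y \<partial>P) + (\<integral>y. k y y \<partial>Q)) / 2" using hI by simp
  have I2: "integrable (P \<Otimes>\<^sub>M Q) (case_prod (\<lambda>p q. k p q))" using I by (simp add: case_prod_beta')
  show "integrable Q (\<lambda>q. \<integral>p. k p q \<partial>P)" using integrable_snd[OF I2] .
  show "kexp k P Q = (\<integral>q. (\<integral>p. k p q \<partial>P) \<partial>Q)"
    unfolding kexp_def using integral_snd[OF I2] by (simp add: case_prod_beta')
qed



lemma core:
  fixes k :: "'y \<Rightarrow> 'y \<Rightarrow> real"
  assumes M: "prob_space M" and Q: "Q \<in> M \<rightarrow>\<^sub>M subprob_algebra L"
    and Qp: "\<And>\<omega>. \<omega> \<in> space M \<Longrightarrow> prob_space (Q \<omega>)"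
    and Qi: "\<And>\<omega>. \<omega> \<in> space M \<Longrightarrow> integrable (Q \<omega>) (\<lambda>y. k y y)"
    and Pp: "prob_space (M \<bind> Q)"
    and Pi: "integrable (M \<bind> Q) (\<lambda>y. k y y)"
    and pd: "pd_kernel k" and km: "case_prod k \<in> borel_measurable (L \<Otimes>\<^sub>M L)"
  shows "integrable M (\<lambda>\<omega>. \<integral>y. k y y \<partial>Q \<omega>)"
    and "(\<integral>\<omega>. (\<integral>y. k y y \<partial>Q \<omega>) \<partial>M) = (\<integral>y. k y y \<partial>(M \<bind> Q))"
    and "integrable M (\<lambda>\<omega>. kexp k (Q \<omega>) (Q \<omega>))"
    and "integrable M (\<lambda>\<omega>. kexp k (M \<bind> Q) (Q \<omega>))"
    and "(\<integral>\<omega>. kexp k (M \<bind> Q) (Q \<omega>) \<partial>M) = kexp k (M \<bind> Q) (M \<bind> Q)"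
proof -
  interpret Mp: prob_space M by fact
  define P where "P = M \<bind> Q"
  have setsQ: "\<And>\<omega>. \<omega> \<in> space M \<Longrightarrow> sets (Q \<omega>) = sets L"
    using measurable_space[OF Q] by (auto simp: space_subprob_algebra)
  have Ps: "sets P = sets L" unfolding P_def by (rule sets_bind[OF setsQ Mp.not_empty])
  have PpP: "prob_space P" using Pp by (simp add: P_def)
  interpret PP: prob_space P by fact
  have PiP: "integrable P (\<lambda>y. k y y)" using Pi by (simp add: P_def)
  have dL: "(\<lambda>y. k y y) \<in> borel_measurable L" by (rule diag_meas[OF km])
  have nn: "\<And>y. 0 \<le> k y y" by (rule pd_nonneg[OF pd])
  note A = bind_integral_nonneg[OF M Q dL nn Pi]
  show aI: "integrable M (\<lambda>\<omega>. \<integral>y. k y y \<partial>Q \<omega>)" by (rule A(1))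
  show aE: "(\<integral>\<omega>. (\<integral>y. k y y \<partial>Q \<omega>) \<partial>M) = (\<integral>y. k y y \<partial>(M \<bind> Q))" by (rule A(2)[symmetric])
  have ck: "case_prod k = (\<lambda>p. k (fst p) (snd p))" by (simp add: fun_eq_iff split_beta)
  have bm: "(\<lambda>\<omega>. kexp k (Q \<omega>) (Q \<omega>)) \<in> borel_measurable M"
  proof -
    have "(\<lambda>\<omega>. Q \<omega> \<Otimes>\<^sub>M Q \<omega>) \<in> M \<rightarrow>\<^sub>M subprob_algebra (L \<Otimes>\<^sub>M L)" by (rule measurable_pair_measure[OF Q Q])
    from measurable_compose[OF this integral_measurable_subprob_algebra[OF km]]
    show ?thesis by (simp add: kexp_def ck)
  qed
  show "integrable M (\<lambda>\<omega>. kexp k (Q \<omega>) (Q \<omega>))"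
  proof (rule Bochner_Integration.integrable_bound[OF aI bm], rule AE_I2)
    fix \<omega> assume w: "\<omega> \<in> space M"
    have "\<bar>kexp k (Q \<omega>) (Q \<omega>)\<bar> \<le> ((\<integral>y. k y y \<partial>Q \<omega>) + (\<integral>y. k y y \<partial>Q \<omega>)) / 2"
      by (rule kexp_props(2)[OF pd km Qp[OF w] setsQ[OF w] Qp[OF w] setsQ[OF w] Qi[OF w] Qi[OF w]])
    moreover have "0 \<le> (\<integral>y. k y y \<partial>Q \<omega>)" by (rule Bochner_Integration.integral_nonneg) (rule nn)
    ultimately show "norm (kexp k (Q \<omega>) (Q \<omega>)) \<le> norm (\<integral>y. k y y \<partial>Q \<omega>)" by simp
  qed
  define E where "E = (\<integral>y. k y y \<partial>P)"
  define g where "g q = (\<integral>p. k p q \<partial>P)" for q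
  define G where "G q = g q + E / 2 + k q q / 2" for q
  have swm: "(\<lambda>(q, p). k p q) \<in> borel_measurable (L \<Otimes>\<^sub>M P)"
  proof -
    have "(\<lambda>x. case_prod k (snd x, fst x)) \<in> borel_measurable (L \<Otimes>\<^sub>M L)"
      by (rule measurable_compose[OF measurable_Pair[OF measurable_snd measurable_fst] km])
    then show ?thesis using sets_pair_measure_cong[OF refl Ps, of L]
      by (simp add: case_prod_beta' cong: measurable_cong_sets)
  qed
  have gm: "g \<in> borel_measurable L" unfolding g_def
    using PP.borel_measurable_lebesgue_integral[of "\<lambda>q p. k p q" L] swm by simp
  have dP: "(\<lambda>y. k y y) \<in> borel_measurable P" using dL Ps by (simp cong: measurable_cong_sets)
  have gb: "\<bar>g q\<bar> \<le> (E + k q q) / 2" if q: "q \<in> space L" for q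
  proof -
    have kq: "(\<lambda>p. k p q) \<in> borel_measurable P"
      using measurable_compose[OF measurable_Pair[OF measurable_ident measurable_const[OF q]] km] Ps
      by (simp cong: measurable_cong_sets)
    have hi: "integrable P (\<lambda>p. (k p p + k q q) / 2)" using PiP by simp
    have ki: "integrable P (\<lambda>p. k p q)"
    proof (rule Bochner_Integration.integrable_bound[OF hi kq], rule AE_I2)
      fix p show "norm (k p q) \<le> norm ((k p p + k q q) / 2)" using pd_bound[OF pd, of p q] by simp
    qed
    have "\<bar>g q\<bar> \<le> (\<integral>p. \<bar>k p q\<bar> \<partial>P)" unfolding g_def using integral_norm_bound[of P "\<lambda>p. k p q"] by simp
    also have "\<dots> \<le> (\<integral>p. (k p p + k q q) / 2 \<partial>P)"
      by (rule integral_mono[OF _ hi]) (use ki pd_bound[OF pd] in auto)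
    also have "\<dots> = (E + k q q) / 2" unfolding E_def using PiP by (simp add: PP.prob_space)
    finally show ?thesis .
  qed
  have Gnn: "0 \<le> G q" if "q \<in> space L" for q using gb[OF that] unfolding G_def by (auto simp: abs_le_iff field_simps)
  have Gm: "G \<in> borel_measurable L" unfolding G_def using gm dL by measurable
  have gP: "integrable P g" unfolding g_def by (rule kexp_props(3)[OF pd km PpP Ps PpP Ps PiP PiP])
  have GP: "integrable P G" unfolding G_def using gP PiP by simp
  have GPI: "integrable (M \<bind> Q) G" using GP by (simp add: P_def)
  note B = bind_integral_nonneg[OF M Q Gm Gnn GPI]
  have ceq: "kexp k P (Q \<omega>) = (\<integral>y. G y \<partial>Q \<omega>) - E / 2 - (\<integral>y. k y y \<partial>Q \<omega>) / 2" if w: "\<omega> \<in> space M" for \<omega>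
  proof -
    interpret QQ: prob_space "Q \<omega>" by (rule Qp[OF w])
    have gQ: "integrable (Q \<omega>) g" unfolding g_def by (rule kexp_props(3)[OF pd km PpP Ps Qp[OF w] setsQ[OF w] PiP Qi[OF w]])
    have "kexp k P (Q \<omega>) = (\<integral>y. g y \<partial>Q \<omega>)" unfolding g_def
      by (rule kexp_props(4)[OF pd km PpP Ps Qp[OF w] setsQ[OF w] PiP Qi[OF w]])
    moreover have "(\<integral>y. G y \<partial>Q \<omega>) = (\<integral>y. g y \<partial>Q \<omega>) + E / 2 + (\<integral>y. k y y \<partial>Q \<omega>) / 2"
      unfolding G_def using gQ Qi[OF w] by (simp add: QQ.prob_space)
    ultimately show ?thesis by simp
  qed
  have cI: "integrable M (\<lambda>\<omega>. (\<integral>y. G y \<partial>Q \<omega>) - E / 2 - (\<integral>y. k y y \<partial>Q \<omega>) / 2)"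
    using B(1) aI by simp
  have "integrable M (\<lambda>\<omega>. kexp k P (Q \<omega>)) \<longleftrightarrow> integrable M (\<lambda>\<omega>. (\<integral>y. G y \<partial>Q \<omega>) - E / 2 - (\<integral>y. k y y \<partial>Q \<omega>) / 2)"
    by (rule Bochner_Integration.integrable_cong[OF refl]) (rule ceq)
  with cI have "integrable M (\<lambda>\<omega>. kexp k P (Q \<omega>))" by simp
  then show "integrable M (\<lambda>\<omega>. kexp k (M \<bind> Q) (Q \<omega>))" by (simp add: P_def)
  have "(\<integral>\<omega>. kexp k P (Q \<omega>) \<partial>M) = (\<integral>\<omega>. (\<integral>y. G y \<partial>Q \<omega>) - E / 2 - (\<integral>y. k y y \<partial>Q \<omega>) / 2 \<partial>M)"
    using ceq by (rule Bochner_Integration.integral_cong[OF refl])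
  also have "\<dots> = (\<integral>\<omega>. (\<integral>y. G y \<partial>Q \<omega>) \<partial>M) - E / 2 - (\<integral>\<omega>. (\<integral>y. k y y \<partial>Q \<omega>) \<partial>M) / 2"
    using B(1) aI by (simp add: Mp.prob_space)
  also have "\<dots> = (\<integral>y. G y \<partial>P) - E / 2 - E / 2"
    using B(2) aE by (simp add: P_def E_def)
  also have "\<dots> = (\<integral>y. g y \<partial>P)"
    unfolding G_def using gP PiP by (simp add: PP.prob_space E_def)
  also have "\<dots> = kexp k P P" unfolding g_def
    by (rule kexp_props(4)[OF pd km PpP Ps PpP Ps PiP PiP, symmetric])
  finally show "(\<integral>\<omega>. kexp k (M \<bind> Q) (Q \<omega>) \<partial>M) = kexp k (M \<bind> Q) (M \<bind> Q)" by (simp add: P_def)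
qed



lemma shapley_dual:
  assumes l: "l \<in> {1..d}" and h: "\<And>A. A \<subseteq> {1..d} \<Longrightarrow> v' A = c - v ({1..d} - A)"
  shows "shapley d v' l = shapley d v l"
proof -
  define S where "S = {1..d} - {l}"
  have fS: "finite S" and cS: "card S = d - 1" using l by (auto simp: S_def)
  have bij: "bij_betw (\<lambda>A. S - A) (Pow S) (Pow S)"
    by (rule bij_betwI[where g="\<lambda>A. S - A"]) auto
  have "(\<Sum>A\<in>Pow S. (v' (insert l A) - v' A) / real ((d - 1) choose card A))
      = (\<Sum>A\<in>Pow S. (v' (insert l (S - A)) - v' (S - A)) / real ((d - 1) choose card (S - A)))"
    using sum.reindex_bij_betw[OF bij, of "\<lambda>A. (v' (insert l A) - v' A) / real ((d - 1) choose card A)"]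
    by simp
  also have "\<dots> = (\<Sum>A\<in>Pow S. (v (insert l A) - v A) / real ((d - 1) choose card A))"
  proof (rule sum.cong[OF refl])
    fix A assume A: "A \<in> Pow S"
    then have AS: "A \<subseteq> S" by auto
    have e1: "{1..d} - insert l (S - A) = A" using AS l by (auto simp: S_def)
    have e2: "{1..d} - (S - A) = insert l A" using AS l by (auto simp: S_def)
    have s1: "insert l (S - A) \<subseteq> {1..d}" "S - A \<subseteq> {1..d}" using l by (auto simp: S_def)
    have cA: "card A \<le> d - 1" using card_mono[OF fS AS] cS by simp
    have "card (S - A) = d - 1 - card A" using card_Diff_subset[OF finite_subset[OF AS fS] AS] cS by simp
    then have ch: "(d - 1) choose card (S - A) = (d - 1) choose card A"
      using binomial_symmetric[OF cA] by simp
    show "(v' (insert l (S - A)) - v' (S - A)) / real ((d - 1) choose card (S - A))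
        = (v (insert l A) - v A) / real ((d - 1) choose card A)"
      unfolding ch h[OF s1(1)] h[OF s1(2)] e1 e2 by simp
  qed
  finally show ?thesis unfolding shapley_def S_def by simp
qed

theorem mainTheorem9:
  fixes M :: "'a measure" and d :: nat
    and N :: "nat \<Rightarrow> 'x measure" and X :: "nat \<Rightarrow> 'a \<Rightarrow> 'x"
    and L :: "'y measure" and \<eta> :: "(nat \<Rightarrow> 'x) \<Rightarrow> 'y" and Y :: "'a \<Rightarrow> 'y"
    and k :: "'y \<Rightarrow> 'y \<Rightarrow> real"
    and \<kappa> :: "nat set \<Rightarrow> (nat \<Rightarrow> 'x) \<Rightarrow> 'y measure"
    and l :: nat
  assumes "prob_space M"
    and "\<And>i. i \<in> {1..d} \<Longrightarrow> X i \<in> measurable M (N i)"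
    and "\<eta> \<in> measurable (\<Pi>\<^sub>M i\<in>{1..d}. N i) L"
    and "Y = (\<lambda>\<omega>. \<eta> (subvec X {1..d} \<omega>))"
    and "pd_kernel k"
    and "case_prod k \<in> borel_measurable (L \<Otimes>\<^sub>M L)"
    and "\<And>A. A \<subseteq> {1..d} \<Longrightarrow>
           is_cond_law M (\<Pi>\<^sub>M i\<in>A. N i) (subvec X A) L Y (\<kappa> A)"
    and "\<And>A x. A \<subseteq> {1..d} \<Longrightarrow> x \<in> space (\<Pi>\<^sub>M i\<in>A. N i) \<Longrightarrow>
           integrable (\<kappa> A x) (\<lambda>y. k y y)"
    and "mmd2_tot M L Y k > 0"
    and "l \<in> {1..d}"
  shows "shapley d
           (\<lambda>A. (\<integral>\<omega>. (\<integral>\<xi>. k \<xi> \<xi> \<partial>(\<kappa> ({1..d} - A) (subvec X ({1..d} - A) \<omega>)))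
                       - kexp k (\<kappa> ({1..d} - A) (subvec X ({1..d} - A) \<omega>))
                                (\<kappa> ({1..d} - A) (subvec X ({1..d} - A) \<omega>)) \<partial>M)
                 / mmd2_tot M L Y k) l
       = shapley d
           (\<lambda>A. (\<integral>\<omega>. mmd2 k (distr M L Y) (\<kappa> A (subvec X A \<omega>)) \<partial>M)
                 / mmd2_tot M L Y k) l"
proof -
  note M = assms(1) and Xm = assms(2) and \<eta>m = assms(3) and Ydef = assms(4) and pd = assms(5)
    and km = assms(6) and cl = assms(7) and ki = assms(8) and l = assms(10)
  interpret Mp: prob_space M by (rule M)
  define P where "P = distr M L Y"
  define t where "t = mmd2_tot M L Y k"
  have Zm: "subvec X B \<in> M \<rightarrow>\<^sub>M (\<Pi>\<^sub>M i\<in>B. N i)" if B: "B \<subseteq> {1..d}" for B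
    unfolding subvec_def by (rule measurable_restrict) (use Xm B in auto)
  have Ym: "Y \<in> M \<rightarrow>\<^sub>M L" unfolding Ydef by (rule measurable_compose[OF Zm \<eta>m]) simp
  have Pp: "prob_space P" unfolding P_def by (rule Mp.prob_space_distr[OF Ym])
  have Qm: "(\<lambda>\<omega>. \<kappa> B (subvec X B \<omega>)) \<in> M \<rightarrow>\<^sub>M subprob_algebra L" if B: "B \<subseteq> {1..d}" for B
    using measurable_compose[OF Zm[OF B]] cl[OF B] unfolding is_cond_law_def by blast
  have Qp: "prob_space (\<kappa> B (subvec X B \<omega>))" if B: "B \<subseteq> {1..d}" and w: "\<omega> \<in> space M" for B \<omega>
    using cl[OF B] measurable_space[OF Zm[OF B] w] unfolding is_cond_law_def by blast
  have Qi: "integrable (\<kappa> B (subvec X B \<omega>)) (\<lambda>y. k y y)" if B: "B \<subseteq> {1..d}" and w: "\<omega> \<in> space M" for B \<omega>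
    using ki[OF B measurable_space[OF Zm[OF B] w]] .
  have Pb: "P = M \<bind> (\<lambda>\<omega>. \<kappa> B (subvec X B \<omega>))" if B: "B \<subseteq> {1..d}" for B
    unfolding P_def by (rule distr_eq_bind[OF M Ym Zm[OF B] cl[OF B]])
  define z0 :: "nat \<Rightarrow> 'x" where "z0 = (\<lambda>i. undefined)"
  have z0: "subvec X {} \<omega> = z0" for \<omega> by (simp add: subvec_def z0_def restrict_def)
  have z0s: "z0 \<in> space (\<Pi>\<^sub>M i\<in>{}. N i)" by (simp add: z0_def space_PiM_empty)
  have "P = M \<bind> (\<lambda>\<omega>. \<kappa> {} z0)" using Pb[of "{}"] by (simp add: z0)
  also have "\<dots> = \<kappa> {} z0"
  proof (rule bind_const'[OF M])
    show "subprob_space (\<kappa> {} z0)"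
      using cl[of "{}"] z0s unfolding is_cond_law_def by (auto intro: prob_space_imp_subprob_space)
  qed
  finally have PK: "P = \<kappa> {} z0" .
  have Pi: "integrable P (\<lambda>y. k y y)" unfolding PK by (rule ki[OF _ z0s]) simp
  define EK where "EK = (\<integral>y. k y y \<partial>P)"
  define K where "K = kexp k P P"
  define bb where "bb B = (\<integral>\<omega>. kexp k (\<kappa> B (subvec X B \<omega>)) (\<kappa> B (subvec X B \<omega>)) \<partial>M)" for B
  have key1: "(\<integral>\<omega>. (\<integral>\<xi>. k \<xi> \<xi> \<partial>(\<kappa> B (subvec X B \<omega>))) - kexp k (\<kappa> B (subvec X B \<omega>)) (\<kappa> B (subvec X B \<omega>)) \<partial>M)
      = EK - bb B"
    and key2: "(\<integral>\<omega>. mmd2 k P (\<kappa> B (subvec X B \<omega>)) \<partial>M) = bb B - K"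
    if B: "B \<subseteq> {1..d}" for B
  proof -
    have Pp': "prob_space (M \<bind> (\<lambda>\<omega>. \<kappa> B (subvec X B \<omega>)))" using Pp Pb[OF B] by simp
    have Pi': "integrable (M \<bind> (\<lambda>\<omega>. \<kappa> B (subvec X B \<omega>))) (\<lambda>y. k y y)" using Pi Pb[OF B] by simp
    note C = core[OF M Qm[OF B] Qp[OF B] Qi[OF B] Pp' Pi' pd km]
    note C' = C[folded Pb[OF B]]
    show "(\<integral>\<omega>. (\<integral>\<xi>. k \<xi> \<xi> \<partial>(\<kappa> B (subvec X B \<omega>))) - kexp k (\<kappa> B (subvec X B \<omega>)) (\<kappa> B (subvec X B \<omega>)) \<partial>M)
      = EK - bb B"
      using C'(1,2,3) by (simp add: EK_def bb_def)
    show "(\<integral>\<omega>. mmd2 k P (\<kappa> B (subvec X B \<omega>)) \<partial>M) = bb B - K"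
      using C'(3,4,5) unfolding mmd2_def by (simp add: K_def bb_def Mp.prob_space)
  qed
  show ?thesis
  proof (rule shapley_dual[OF l])
    fix A assume A: "A \<subseteq> {1..d}"
    have B: "{1..d} - A \<subseteq> {1..d}" by auto
    have e: "{1..d} - ({1..d} - A) = A" using A by auto
    show "(\<integral>\<omega>. (\<integral>\<xi>. k \<xi> \<xi> \<partial>(\<kappa> ({1..d} - A) (subvec X ({1..d} - A) \<omega>)))
                       - kexp k (\<kappa> ({1..d} - A) (subvec X ({1..d} - A) \<omega>))
                                (\<kappa> ({1..d} - A) (subvec X ({1..d} - A) \<omega>)) \<partial>M)
                 / mmd2_tot M L Y k
        = (EK - K) / t - (\<integral>\<omega>. mmd2 k (distr M L Y) (\<kappa> ({1..d} - A) (subvec X ({1..d} - A) \<omega>)) \<partial>M)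
                 / mmd2_tot M L Y k"
      unfolding key1[OF B] key2[OF B, unfolded P_def] t_def by (simp add: diff_divide_distrib)
  qed
qed

end
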